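(* Let $p$ be a prime, $n\ge1$, $s>0$ an integer, and let $\mu$ be an ergodic conjugation-invariant Borel probability measure on ${\rm Sub}(\mathcal{L}_{n,p})$ with $\mu(\pi_1^{-1}(s))=1$. Then $\mu$ is supported on a single finite conjugacy class of subgroups. Consequently, the set of ergodic conjugation-invariant Borel probability measures $\mu$ on ${\rm Sub}(\mathcal{L}_{n,p})$ with $\mu(\pi_1^{-1}(s))=1$ for some $s\ge1$ is countable.
   Context: $\mathcal{L}_{n,p}=\left(\bigoplus_{\mathbb{Z}}(\mathbb{Z}/p\mathbb{Z})^n\right)\rtimes\mathbb{Z}$; ${\rm Sub}(\mathcal{L}_{n,p})$ is the compact space of its subgroups (topology from $\{0,1\}^{\mathcal{L}_{n,p}}$), on which $\mathcal{L}_{n,p}$ acts by conjugation. For a subgroup $V$, $\pi_1(V)\ge0$ is defined by: the projection of $V$ to $\mathbb{Z}$ equals $\pi_1(V)\mathbb{Z}$. *)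

theory Defs
  imports "HOL-Analysis.Analysis" "HOL-Probability.Probability" "HOL-Algebra.Group"
begin

text \<open>Elements of L_{n,p} = (\<Oplus>_Z (Z/pZ)^n) \<rtimes> Z are pairs (f,k): f i j is the j-th coordinate
(j < n) of the i-th summand, a residue in {0..<p}; f is finitely supported.\<close>

definition Lcarrier :: "nat \<Rightarrow> nat \<Rightarrow> ((int \<Rightarrow> nat \<Rightarrow> int) \<times> int) set" where
  "Lcarrier n p = {(f, k). (\<forall>i j. 0 \<le> f i j \<and> f i j < int p) \<and> (\<forall>i j. n \<le> j \<longrightarrow> f i j = 0)
                           \<and> finite {i. \<exists>j. f i j \<noteq> 0}}"

definition Lgrp :: "nat \<Rightarrow> nat \<Rightarrow> ((int \<Rightarrow> nat \<Rightarrow> int) \<times> int) monoid" where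
  "Lgrp n p = \<lparr> carrier = Lcarrier n p,
      mult = (\<lambda>(f, k) (g, l). (\<lambda>i j. (f i j + g (i - k) j) mod int p, k + l)),
      one = (\<lambda>_ _. 0, 0) \<rparr>"

definition SubL :: "nat \<Rightarrow> nat \<Rightarrow> ((int \<Rightarrow> nat \<Rightarrow> int) \<times> int) set set" where
  "SubL n p = {H. subgroup H (Lgrp n p)}"

definition SubTop :: "nat \<Rightarrow> nat \<Rightarrow> ((int \<Rightarrow> nat \<Rightarrow> int) \<times> int) set topology" where
  "SubTop n p = pullback_topology (SubL n p) (\<lambda>H. restrict (\<lambda>g. g \<in> H) (Lcarrier n p))
                   (product_topology (\<lambda>_. discrete_topology (UNIV :: bool set)) (Lcarrier n p))"

definition borel_of_top :: "'a topology \<Rightarrow> 'a measure" where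
  "borel_of_top X = sigma (topspace X) {U. openin X U}"

definition conjL :: "nat \<Rightarrow> nat \<Rightarrow> (int \<Rightarrow> nat \<Rightarrow> int) \<times> int \<Rightarrow>
      ((int \<Rightarrow> nat \<Rightarrow> int) \<times> int) set \<Rightarrow> ((int \<Rightarrow> nat \<Rightarrow> int) \<times> int) set" where
  "conjL n p g H = (\<lambda>h. g \<otimes>\<^bsub>Lgrp n p\<^esub> h \<otimes>\<^bsub>Lgrp n p\<^esub> inv\<^bsub>Lgrp n p\<^esub> g) ` H"

definition borel_prob_Sub :: "nat \<Rightarrow> nat \<Rightarrow> ((int \<Rightarrow> nat \<Rightarrow> int) \<times> int) set measure \<Rightarrow> bool" where
  "borel_prob_Sub n p \<mu> \<longleftrightarrow> prob_space \<mu> \<and> sets \<mu> = sets (borel_of_top (SubTop n p))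
      \<and> space \<mu> = topspace (SubTop n p)"

definition conj_invariant :: "nat \<Rightarrow> nat \<Rightarrow> ((int \<Rightarrow> nat \<Rightarrow> int) \<times> int) set measure \<Rightarrow> bool" where
  "conj_invariant n p \<mu> \<longleftrightarrow> (\<forall>g \<in> Lcarrier n p. \<forall>A \<in> sets \<mu>.
      emeasure \<mu> ((conjL n p g -` A) \<inter> space \<mu>) = emeasure \<mu> A)"

definition conj_ergodic :: "nat \<Rightarrow> nat \<Rightarrow> ((int \<Rightarrow> nat \<Rightarrow> int) \<times> int) set measure \<Rightarrow> bool" where
  "conj_ergodic n p \<mu> \<longleftrightarrow> (\<forall>A \<in> sets \<mu>.
      (\<forall>g \<in> Lcarrier n p. (conjL n p g -` A) \<inter> space \<mu> = A) \<longrightarrow> emeasure \<mu> A = 0 \<or> emeasure \<mu> A = 1)"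

text \<open>\<pi>_1(V) = s means: projection of V to Z equals sZ.\<close>
definition pi1_fiber :: "nat \<Rightarrow> nat \<Rightarrow> int \<Rightarrow> ((int \<Rightarrow> nat \<Rightarrow> int) \<times> int) set set" where
  "pi1_fiber n p s = {V \<in> SubL n p. snd ` V = range (\<lambda>m. s * m)}"

definition conj_class :: "nat \<Rightarrow> nat \<Rightarrow> ((int \<Rightarrow> nat \<Rightarrow> int) \<times> int) set \<Rightarrow> ((int \<Rightarrow> nat \<Rightarrow> int) \<times> int) set set" where
  "conj_class n p H = (\<lambda>g. conjL n p g H) ` Lcarrier n p"

end

theory Submission imports Defs begin

lemma Lcarrier_iff:
  "(f, k) \<in> Lcarrier n p \<longleftrightarrow> (\<forall>i j. 0 \<le> f i j \<and> f i j < int p) \<and> (\<forall>i j. n \<le> j \<longrightarrow> f i j = 0)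
                           \<and> finite {i. \<exists>j. f i j \<noteq> 0}"
  by (simp add: Lcarrier_def)

lemma Lmult: "(f, k) \<otimes>\<^bsub>Lgrp n p\<^esub> (g, l) = (\<lambda>i j. (f i j + g (i - k) j) mod int p, k + l)"
  by (simp add: Lgrp_def)

lemma Lone: "\<one>\<^bsub>Lgrp n p\<^esub> = (\<lambda>_ _. 0, 0)"
  by (simp add: Lgrp_def)

lemma Lcarr: "carrier (Lgrp n p) = Lcarrier n p"
  by (simp add: Lgrp_def)

lemma supp_shift_finite:
  fixes g :: "int \<Rightarrow> 'b \<Rightarrow> 'c::zero" and k :: int
  assumes "finite {i. \<exists>j. g i j \<noteq> 0}"
  shows "finite {i. \<exists>j. g (i - k) j \<noteq> 0}"
proof -
  have "{i. \<exists>j. g (i - k) j \<noteq> 0} = (\<lambda>i. i + k) ` {i. \<exists>j. g i j \<noteq> 0}"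
    by (auto simp: image_iff) (metis diff_add_cancel)
  thus ?thesis using assms by simp
qed

lemma mult_closed:
  assumes "0 < p" "(f, k) \<in> Lcarrier n p" "(g, l) \<in> Lcarrier n p"
  shows "(\<lambda>i j. (f i j + g (i - k) j) mod int p, k + l) \<in> Lcarrier n p"
proof -
  have fs: "finite {i. \<exists>j. f i j \<noteq> 0}" "finite {i. \<exists>j. g (i - k) j \<noteq> 0}"
    using assms supp_shift_finite by (auto simp: Lcarrier_iff)
  have "{i. \<exists>j. (f i j + g (i - k) j) mod int p \<noteq> 0} \<subseteq> {i. \<exists>j. f i j \<noteq> 0} \<union> {i. \<exists>j. g (i - k) j \<noteq> 0}"
    by (auto, (metis add.right_neutral add_0 mod_0)+)
  hence "finite {i. \<exists>j. (f i j + g (i - k) j) mod int p \<noteq> 0}"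
    using fs finite_subset by blast
  thus ?thesis using assms by (auto simp: Lcarrier_iff)
qed

lemma mod_self_id: "0 \<le> (x::int) \<Longrightarrow> x < int p \<Longrightarrow> x mod int p = x"
  by simp

lemma Lgroup: assumes "0 < p" shows "group (Lgrp n p)"
proof (rule groupI)
  fix x y assume "x \<in> carrier (Lgrp n p)" "y \<in> carrier (Lgrp n p)"
  thus "x \<otimes>\<^bsub>Lgrp n p\<^esub> y \<in> carrier (Lgrp n p)"
    using mult_closed[OF assms] by (cases x, cases y) (simp add: Lmult Lcarr)
next
  show "\<one>\<^bsub>Lgrp n p\<^esub> \<in> carrier (Lgrp n p)" by (simp add: Lone Lcarr Lcarrier_iff assms)
next
  fix x y z assume "x \<in> carrier (Lgrp n p)" "y \<in> carrier (Lgrp n p)" "z \<in> carrier (Lgrp n p)"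
  thus "x \<otimes>\<^bsub>Lgrp n p\<^esub> y \<otimes>\<^bsub>Lgrp n p\<^esub> z = x \<otimes>\<^bsub>Lgrp n p\<^esub> (y \<otimes>\<^bsub>Lgrp n p\<^esub> z)"
    by (cases x, cases y, cases z) (auto simp: Lmult mod_add_left_eq mod_add_right_eq algebra_simps)
next
  fix x assume "x \<in> carrier (Lgrp n p)"
  thus "\<one>\<^bsub>Lgrp n p\<^esub> \<otimes>\<^bsub>Lgrp n p\<^esub> x = x"
    by (cases x) (auto simp: Lmult Lone Lcarr Lcarrier_iff)
next
  fix x assume x: "x \<in> carrier (Lgrp n p)"
  obtain f k where xe: "x = (f, k)" by (cases x)
  let ?y = "(\<lambda>i j. (- f (i + k) j) mod int p, - k)"
  have "?y \<in> carrier (Lgrp n p)"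
  proof -
    have "{i. \<exists>j. (- f (i + k) j) mod int p \<noteq> 0} \<subseteq> {i. \<exists>j. f (i - (-k)) j \<noteq> 0}" by (auto, (metis minus_zero mod_0)+)
    moreover have "finite {i. \<exists>j. f (i - (-k)) j \<noteq> 0}"
      using x xe supp_shift_finite[of f "-k"] by (auto simp: Lcarr Lcarrier_iff)
    ultimately show ?thesis using x xe assms finite_subset by (auto simp: Lcarr Lcarrier_iff)
  qed
  moreover have "?y \<otimes>\<^bsub>Lgrp n p\<^esub> x = \<one>\<^bsub>Lgrp n p\<^esub>"
    by (simp add: xe Lmult Lone mod_add_left_eq)
  ultimately show "\<exists>y\<in>carrier (Lgrp n p). y \<otimes>\<^bsub>Lgrp n p\<^esub> x = \<one>\<^bsub>Lgrp n p\<^esub>" by blast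
qed

lemma Linv:
  assumes "0 < p" "(f, k) \<in> Lcarrier n p"
  shows "inv\<^bsub>Lgrp n p\<^esub> (f, k) = (\<lambda>i j. (- f (i + k) j) mod int p, - k)"
proof -
  interpret group "Lgrp n p" by (rule Lgroup[OF assms(1)])
  obtain y where y: "y \<in> carrier (Lgrp n p)" "y \<otimes>\<^bsub>Lgrp n p\<^esub> (f, k) = \<one>\<^bsub>Lgrp n p\<^esub>"
    using assms(2) l_inv_ex by (metis Lcarr)
  obtain g l where ye: "y = (g, l)" by (cases y)
  have "inv\<^bsub>Lgrp n p\<^esub> (f, k) = (g, l)" using y assms(2) ye by (intro inv_equality) (auto simp: Lcarr)
  moreover have "(g, l) = (\<lambda>i j. (- f (i + k) j) mod int p, - k)"
  proof -
    have e: "\<And>i j. (g i j + f (i - l) j) mod int p = 0" "l + k = 0"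
      using y(2) unfolding ye Lmult Lone by (auto dest: fun_cong[where x=i for i] simp: fun_eq_iff)
    have "l = -k" using e(2) by simp
    moreover have "\<And>i j. g i j = (- f (i + k) j) mod int p"
    proof -
      fix i j
      have g: "0 \<le> g i j" "g i j < int p" using y(1) ye by (auto simp: Lcarr Lcarrier_iff)
      have "(g i j + f (i + k) j) mod int p = 0" using e(1)[of i j] \<open>l = -k\<close> by simp
      hence "g i j mod int p = (- f (i + k) j) mod int p"
        by (metis add.commute add_diff_cancel_left' diff_0 mod_diff_left_eq)
      thus "g i j = (- f (i + k) j) mod int p" using g by simp
    qed
    ultimately show ?thesis by (auto simp: fun_eq_iff)
  qed
  ultimately show ?thesis by simp
qed

lemma snd_mult: "snd (x \<otimes>\<^bsub>Lgrp n p\<^esub> y) = snd x + snd y"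
  by (cases x, cases y) (simp add: Lmult)

lemma snd_inv: "0 < p \<Longrightarrow> x \<in> Lcarrier n p \<Longrightarrow> snd (inv\<^bsub>Lgrp n p\<^esub> x) = - snd x"
  by (cases x) (simp add: Linv)

context group begin

lemma inv_cancel_aux: "x \<in> carrier G \<Longrightarrow> y \<in> carrier G \<Longrightarrow> inv y \<otimes> (y \<otimes> x) = x"
  by (simp add: m_assoc[symmetric])

lemma conj_subgroup:
  assumes "subgroup H G" "g \<in> carrier G"
  shows "subgroup ((\<lambda>h. g \<otimes> h \<otimes> inv g) ` H) G"
proof (rule subgroupI)
  have Hc: "H \<subseteq> carrier G" using assms(1) subgroup.subset by blast
  show "(\<lambda>h. g \<otimes> h \<otimes> inv g) ` H \<subseteq> carrier G" using Hc assms(2) by auto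
  show "(\<lambda>h. g \<otimes> h \<otimes> inv g) ` H \<noteq> {}" using subgroup.one_closed[OF assms(1)] by blast
  fix a assume "a \<in> (\<lambda>h. g \<otimes> h \<otimes> inv g) ` H"
  then obtain h where h: "h \<in> H" "a = g \<otimes> h \<otimes> inv g" by blast
  have hc: "h \<in> carrier G" using h Hc by blast
  have "inv a = g \<otimes> inv h \<otimes> inv g"
    using h hc assms(2) by (simp add: inv_mult_group m_assoc)
  thus "inv a \<in> (\<lambda>h. g \<otimes> h \<otimes> inv g) ` H" using subgroup.m_inv_closed[OF assms(1) h(1)] by blast
next
  have Hc: "H \<subseteq> carrier G" using assms(1) subgroup.subset by blast
  fix a b assume "a \<in> (\<lambda>h. g \<otimes> h \<otimes> inv g) ` H" "b \<in> (\<lambda>h. g \<otimes> h \<otimes> inv g) ` H"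
  then obtain h1 h2 where h: "h1 \<in> H" "a = g \<otimes> h1 \<otimes> inv g" "h2 \<in> H" "b = g \<otimes> h2 \<otimes> inv g" by blast
  have hc: "h1 \<in> carrier G" "h2 \<in> carrier G" using h Hc by auto
  have "a \<otimes> b = g \<otimes> (h1 \<otimes> h2) \<otimes> inv g"
    using h hc assms(2) by (simp add: m_assoc inv_cancel_aux)
  thus "a \<otimes> b \<in> (\<lambda>h. g \<otimes> h \<otimes> inv g) ` H" using subgroup.m_closed[OF assms(1) h(1,3)] by blast
qed

lemma conj_comp:
  assumes "H \<subseteq> carrier G" "a \<in> carrier G" "b \<in> carrier G"
  shows "(\<lambda>h. a \<otimes> h \<otimes> inv a) ` ((\<lambda>h. b \<otimes> h \<otimes> inv b) ` H) = (\<lambda>h. (a \<otimes> b) \<otimes> h \<otimes> inv (a \<otimes> b)) ` H"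
proof -
  have "\<And>h. h \<in> H \<Longrightarrow> a \<otimes> (b \<otimes> h \<otimes> inv b) \<otimes> inv a = (a \<otimes> b) \<otimes> h \<otimes> inv (a \<otimes> b)"
    using assms by (auto simp: inv_mult_group m_assoc)
  thus ?thesis by (auto simp: image_image image_iff)
qed

lemma conj_one:
  assumes "H \<subseteq> carrier G"
  shows "(\<lambda>h. \<one> \<otimes> h \<otimes> inv \<one>) ` H = H"
  using assms by (auto simp: image_iff) (metis l_one r_one in_mono)+

end


lemma Lgroup_p: "prime p \<Longrightarrow> group (Lgrp n p)"
  using Lgroup prime_gt_0_nat by blast

lemma conjL_SubL:
  assumes "0 < p" "V \<in> SubL n p" "g \<in> Lcarrier n p"
  shows "conjL n p g V \<in> SubL n p"
  using group.conj_subgroup[OF Lgroup[OF assms(1)]] assms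
  by (auto simp: SubL_def conjL_def Lcarr)

lemma SubL_sub: "V \<in> SubL n p \<Longrightarrow> V \<subseteq> Lcarrier n p"
  by (metis SubL_def mem_Collect_eq subgroup.subset Lcarr)

lemma conjL_comp:
  assumes "0 < p" "V \<subseteq> Lcarrier n p" "a \<in> Lcarrier n p" "b \<in> Lcarrier n p"
  shows "conjL n p a (conjL n p b V) = conjL n p (a \<otimes>\<^bsub>Lgrp n p\<^esub> b) V"
  using group.conj_comp[OF Lgroup[OF assms(1)]] assms
  by (auto simp: conjL_def Lcarr)

lemma conjL_one:
  assumes "0 < p" "V \<subseteq> Lcarrier n p"
  shows "conjL n p \<one>\<^bsub>Lgrp n p\<^esub> V = V"
  using group.conj_one[OF Lgroup[OF assms(1)]] assms
  by (auto simp: conjL_def Lcarr)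

lemma inv_carr: "0 < p \<Longrightarrow> g \<in> Lcarrier n p \<Longrightarrow> inv\<^bsub>Lgrp n p\<^esub> g \<in> Lcarrier n p"
  using group.inv_closed[OF Lgroup] by (metis Lcarr)

lemma mult_carr: "0 < p \<Longrightarrow> g \<in> Lcarrier n p \<Longrightarrow> h \<in> Lcarrier n p \<Longrightarrow> g \<otimes>\<^bsub>Lgrp n p\<^esub> h \<in> Lcarrier n p"
  using Lgroup group.is_monoid monoid.m_closed by (metis Lcarr)

lemma conjL_back:
  assumes "0 < p" "V \<subseteq> Lcarrier n p" "g \<in> Lcarrier n p"
  shows "conjL n p (inv\<^bsub>Lgrp n p\<^esub> g) (conjL n p g V) = V"
proof -
  have "conjL n p (inv\<^bsub>Lgrp n p\<^esub> g) (conjL n p g V) = conjL n p (inv\<^bsub>Lgrp n p\<^esub> g \<otimes>\<^bsub>Lgrp n p\<^esub> g) V"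
    using assms inv_carr by (intro conjL_comp) auto
  also have "inv\<^bsub>Lgrp n p\<^esub> g \<otimes>\<^bsub>Lgrp n p\<^esub> g = \<one>\<^bsub>Lgrp n p\<^esub>"
    using group.l_inv[OF Lgroup[OF assms(1)]] assms(3) by (metis Lcarr)
  finally show ?thesis using conjL_one assms by simp
qed

lemma conjL_inj:
  assumes "0 < p" "V1 \<subseteq> Lcarrier n p" "V2 \<subseteq> Lcarrier n p" "g \<in> Lcarrier n p"
    "conjL n p g V1 = conjL n p g V2"
  shows "V1 = V2"
  using conjL_back[OF assms(1) assms(2,4)] conjL_back[OF assms(1) assms(3,4)] assms(5) by metis

lemma conjL_fiber:
  assumes "0 < p" "V \<in> pi1_fiber n p t" "g \<in> Lcarrier n p"
  shows "conjL n p g V \<in> pi1_fiber n p t"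
proof -
  have "snd ` conjL n p g V = snd ` V"
  proof -
    have "\<And>h. h \<in> V \<Longrightarrow> snd (g \<otimes>\<^bsub>Lgrp n p\<^esub> h \<otimes>\<^bsub>Lgrp n p\<^esub> inv\<^bsub>Lgrp n p\<^esub> g) = snd h"
      using assms by (simp add: snd_mult snd_inv)
    thus ?thesis unfolding conjL_def image_image by (intro image_cong) auto
  qed
  thus ?thesis using assms conjL_SubL[OF assms(1) _ assms(3), of V] by (auto simp: pi1_fiber_def)
qed

lemma class_SubL:
  assumes "0 < p" "H \<in> SubL n p"
  shows "conj_class n p H \<subseteq> SubL n p"
  using conjL_SubL[OF assms(1,2)] by (auto simp: conj_class_def)

lemma class_invariant:
  assumes "0 < p" "H \<in> SubL n p" "g \<in> Lcarrier n p"
  shows "conjL n p g -` conj_class n p H \<inter> SubL n p = conj_class n p H"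
proof
  show "conjL n p g -` conj_class n p H \<inter> SubL n p \<subseteq> conj_class n p H"
  proof
    fix V assume "V \<in> conjL n p g -` conj_class n p H \<inter> SubL n p"
    then obtain h where h: "h \<in> Lcarrier n p" "conjL n p g V = conjL n p h H" "V \<in> SubL n p"
      by (auto simp: conj_class_def)
    have "V = conjL n p (inv\<^bsub>Lgrp n p\<^esub> g) (conjL n p h H)"
      using conjL_back[OF assms(1) SubL_sub[OF h(3)] assms(3)] h(2) by simp
    also have "\<dots> = conjL n p (inv\<^bsub>Lgrp n p\<^esub> g \<otimes>\<^bsub>Lgrp n p\<^esub> h) H"
      using assms h inv_carr SubL_sub by (intro conjL_comp) auto
    finally show "V \<in> conj_class n p H"
      using assms h inv_carr mult_carr by (auto simp: conj_class_def)
  qed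
next
  show "conj_class n p H \<subseteq> conjL n p g -` conj_class n p H \<inter> SubL n p"
  proof
    fix V assume "V \<in> conj_class n p H"
    then obtain h where h: "h \<in> Lcarrier n p" "V = conjL n p h H" by (auto simp: conj_class_def)
    have "conjL n p g V = conjL n p (g \<otimes>\<^bsub>Lgrp n p\<^esub> h) H"
      using assms h SubL_sub by (simp add: conjL_comp)
    thus "V \<in> conjL n p g -` conj_class n p H \<inter> SubL n p"
      using assms h mult_carr conjL_SubL by (auto simp: conj_class_def)
  qed
qed


lemma Lcarrier_countable: "countable (Lcarrier n p)"
proof -
  let ?F = "\<lambda>x::(int \<Rightarrow> nat \<Rightarrow> int) \<times> int. ({(i, j, fst x i j) | i j. fst x i j \<noteq> 0}, snd x)"
  have inj: "inj_on ?F (Lcarrier n p)"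
  proof (rule inj_onI)
    fix x y assume "x \<in> Lcarrier n p" "y \<in> Lcarrier n p" and e: "?F x = ?F y"
    have "fst x = fst y"
    proof (rule ext, rule ext)
      fix i j
      show "fst x i j = fst y i j"
      proof (cases "fst x i j = 0")
        case True
        show ?thesis
        proof (rule ccontr)
          assume "fst x i j \<noteq> fst y i j"
          hence "(i, j, fst y i j) \<in> fst (?F y)" using True by auto
          hence "(i, j, fst y i j) \<in> fst (?F x)" using e by simp
          thus False using True \<open>fst x i j \<noteq> fst y i j\<close> by auto
        qed
      next
        case False
        hence "(i, j, fst x i j) \<in> fst (?F x)" by auto
        hence "(i, j, fst x i j) \<in> fst (?F y)" using e by simp
        thus ?thesis by auto
      qed
    qed
    moreover have "snd x = snd y" using e by simp
    ultimately show "x = y" by (simp add: prod_eq_iff)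
  qed
  have "?F ` Lcarrier n p \<subseteq> {A. finite A \<and> A \<subseteq> UNIV} \<times> UNIV"
  proof (rule image_subsetI)
    fix x assume x: "x \<in> Lcarrier n p"
    obtain f k where xe: "x = (f, k)" by (cases x)
    from x have "(f, k) \<in> Lcarrier n p" using xe by simp
    hence fin: "finite {i. \<exists>j. f i j \<noteq> 0}" and z: "\<forall>i j. n \<le> j \<longrightarrow> f i j = 0"
      by (auto simp: Lcarrier_iff)
    have sub: "{(i, j, f i j) | i j. f i j \<noteq> 0} \<subseteq> (\<lambda>(i, j). (i, j, f i j)) ` ({i. \<exists>j. f i j \<noteq> 0} \<times> {..<n})"
      using z by (auto simp: image_iff; meson not_le)
    have "finite ((\<lambda>(i, j). (i, j, f i j)) ` ({i. \<exists>j. f i j \<noteq> 0} \<times> {..<n}))"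
      by (intro finite_imageI finite_cartesian_product fin finite_lessThan)
    hence "finite {(i, j, f i j) | i j. f i j \<noteq> 0}" using sub finite_subset by blast
    thus "?F x \<in> {A. finite A \<and> A \<subseteq> UNIV} \<times> UNIV" using xe by simp
  qed
  moreover have "countable ({A :: (int \<times> nat \<times> int) set. finite A \<and> A \<subseteq> UNIV} \<times> (UNIV :: int set))"
    by (intro countable_SIGMA countable_Collect_finite_subset) auto
  ultimately have "countable (?F ` Lcarrier n p)" using countable_subset by blast
  thus ?thesis using inj countable_image_inj_on by blast
qed

lemma topspace_SubTop: "topspace (SubTop n p) = SubL n p"
  by (auto simp: SubTop_def topspace_pullback_topology topspace_product_topology PiE_iff)

lemma open_mem:
  assumes "g \<in> Lcarrier n p"
  shows "openin (SubTop n p) {V \<in> SubL n p. (g \<in> V) = b}"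
proof -
  let ?T = "product_topology (\<lambda>_. discrete_topology (UNIV :: bool set)) (Lcarrier n p)"
  let ?U = "{x \<in> topspace ?T. x g \<in> {b}}"
  have "openin ?T ?U"
    by (rule openin_continuous_map_preimage[OF continuous_map_product_projection[OF assms]]) simp
  moreover have "{V \<in> SubL n p. (g \<in> V) = b} = (\<lambda>H. restrict (\<lambda>g. g \<in> H) (Lcarrier n p)) -` ?U \<inter> SubL n p"
    using assms by (auto simp: topspace_product_topology PiE_iff)
  ultimately show ?thesis unfolding SubTop_def openin_pullback_topology by blast
qed

lemma borel_sets: "sets (borel_of_top X) = sigma_sets (topspace X) {U. openin X U}"
  unfolding borel_of_top_def by (rule sets_measure_of) (auto dest: openin_subset)

lemma open_in_sets:
  assumes "borel_prob_Sub n p \<mu>" "openin (SubTop n p) U"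
  shows "U \<in> sets \<mu>"
  using assms by (auto simp: borel_prob_Sub_def borel_sets)

lemma space_mu: "borel_prob_Sub n p \<mu> \<Longrightarrow> space \<mu> = SubL n p"
  by (simp add: borel_prob_Sub_def topspace_SubTop)

lemma singleton_sets:
  assumes "borel_prob_Sub n p \<mu>" "H \<in> SubL n p" "0 < p"
  shows "{H} \<in> sets \<mu>"
proof -
  let ?A = "\<lambda>g. {V \<in> SubL n p. (g \<in> V) = (g \<in> H)}"
  have ne: "Lcarrier n p \<noteq> {}" using Lcarrier_iff[of "\<lambda>_ _. 0" 0 n p] assms(3) by auto
  have "(\<Inter>g\<in>Lcarrier n p. ?A g) \<in> sets \<mu>"
    using Lcarrier_countable ne open_in_sets[OF assms(1) open_mem]
    by (intro sets.countable_INT') auto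
  moreover have "(\<Inter>g\<in>Lcarrier n p. ?A g) = {H}"
  proof
    show "{H} \<subseteq> (\<Inter>g\<in>Lcarrier n p. ?A g)" using assms(2) by auto
    show "(\<Inter>g\<in>Lcarrier n p. ?A g) \<subseteq> {H}"
    proof
      fix V assume V: "V \<in> (\<Inter>g\<in>Lcarrier n p. ?A g)"
      hence "V \<in> SubL n p" using ne by auto
      hence "V \<subseteq> Lcarrier n p" "H \<subseteq> Lcarrier n p" using SubL_sub assms(2) by auto
      thus "V \<in> {H}" using V by auto
    qed
  qed
  ultimately show ?thesis by simp
qed


section \<open>Shift-invariant subgroups of the base group are countably many\<close>

definition shiftf :: "int \<Rightarrow> (int \<Rightarrow> nat \<Rightarrow> int) \<Rightarrow> (int \<Rightarrow> nat \<Rightarrow> int)" where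
  "shiftf m w = (\<lambda>i j. w (i - m) j)"
definition padd :: "nat \<Rightarrow> (int \<Rightarrow> nat \<Rightarrow> int) \<Rightarrow> (int \<Rightarrow> nat \<Rightarrow> int) \<Rightarrow> (int \<Rightarrow> nat \<Rightarrow> int)" where
  "padd p a b = (\<lambda>i j. (a i j + b i j) mod int p)"
definition psub :: "nat \<Rightarrow> (int \<Rightarrow> nat \<Rightarrow> int) \<Rightarrow> (int \<Rightarrow> nat \<Rightarrow> int) \<Rightarrow> (int \<Rightarrow> nat \<Rightarrow> int)" where
  "psub p a b = (\<lambda>i j. (a i j - b i j) mod int p)"
definition Bset :: "nat \<Rightarrow> nat \<Rightarrow> (int \<Rightarrow> nat \<Rightarrow> int) set" where
  "Bset n p = {f. (f, 0) \<in> Lcarrier n p}"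
definition invsp :: "nat \<Rightarrow> nat \<Rightarrow> int \<Rightarrow> (int \<Rightarrow> nat \<Rightarrow> int) set \<Rightarrow> bool" where
  "invsp n p s W \<longleftrightarrow> W \<subseteq> Bset n p \<and> (\<forall>a\<in>W. \<forall>b\<in>W. padd p a b \<in> W \<and> psub p a b \<in> W)
     \<and> (\<forall>a\<in>W. shiftf s a \<in> W \<and> shiftf (-s) a \<in> W)"
definition TT :: "(int \<Rightarrow> nat \<Rightarrow> int) set \<Rightarrow> nat \<Rightarrow> (int \<Rightarrow> nat \<Rightarrow> int) set" where
  "TT W k = {w \<in> W. (\<forall>i<0. \<forall>j. w i j = 0) \<and> (\<forall>i > int k. \<forall>j. w i j = 0)}"
definition LL :: "(int \<Rightarrow> nat \<Rightarrow> int) set \<Rightarrow> nat \<Rightarrow> (nat \<Rightarrow> int) set" where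
  "LL W k = (\<lambda>w. w (int k)) ` TT W k"
definition Vec :: "nat \<Rightarrow> nat \<Rightarrow> (nat \<Rightarrow> int) set" where
  "Vec n p = {v. \<forall>x. (x \<in> {..<n} \<longrightarrow> v x \<in> {0..<int p}) \<and> (x \<notin> {..<n} \<longrightarrow> v x = 0)}"
definition Box :: "nat \<Rightarrow> nat \<Rightarrow> nat \<Rightarrow> (int \<Rightarrow> nat \<Rightarrow> int) set" where
  "Box n p N = {w. \<forall>i. (i \<in> {0..int N} \<longrightarrow> w i \<in> Vec n p) \<and> (i \<notin> {0..int N} \<longrightarrow> w i = (\<lambda>_. 0))}"
definition stab :: "int \<Rightarrow> (int \<Rightarrow> nat \<Rightarrow> int) set \<Rightarrow> nat \<Rightarrow> bool" where
  "stab s W N \<longleftrightarrow> (\<forall>i. N \<le> i \<longrightarrow> LL W i \<subseteq> LL W (i - nat s)) \<and> nat s \<le> N"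

lemma Vec_finite: "finite (Vec n p)"
  unfolding Vec_def by (rule finite_set_of_finite_funs) auto

lemma Box_finite: "finite (Box n p N)"
  unfolding Box_def by (rule finite_set_of_finite_funs[OF _ Vec_finite]) auto

lemma Bset_iff: "f \<in> Bset n p \<longleftrightarrow> (\<forall>i j. 0 \<le> f i j \<and> f i j < int p) \<and> (\<forall>i j. n \<le> j \<longrightarrow> f i j = 0)
                           \<and> finite {i. \<exists>j. f i j \<noteq> 0}"
  by (simp add: Bset_def Lcarrier_iff)

lemma LL_Vec:
  assumes "invsp n p s W" shows "LL W k \<subseteq> Vec n p"
proof
  fix v assume "v \<in> LL W k"
  then obtain w where w: "w \<in> W" "v = w (int k)" by (auto simp: LL_def TT_def)
  hence "w \<in> Bset n p" using assms by (auto simp: invsp_def)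
  hence "\<forall>i j. 0 \<le> w i j \<and> w i j < int p" "\<forall>i j. n \<le> j \<longrightarrow> w i j = 0" by (auto simp: Bset_iff)
  thus "v \<in> Vec n p" using w(2) unfolding Vec_def by (auto simp: not_less)
qed

lemma LL_finite: "invsp n p s W \<Longrightarrow> finite (LL W k)"
  by (rule finite_subset[OF LL_Vec Vec_finite])

lemma TT_Box:
  assumes "invsp n p s W" shows "TT W N \<subseteq> Box n p N"
proof
  fix w assume w: "w \<in> TT W N"
  hence "w \<in> Bset n p" using assms by (auto simp: invsp_def TT_def)
  hence b: "\<forall>i j. 0 \<le> w i j \<and> w i j < int p" "\<forall>i j. n \<le> j \<longrightarrow> w i j = 0" by (auto simp: Bset_iff)
  have z: "\<forall>i<0. \<forall>j. w i j = 0" "\<forall>i > int N. \<forall>j. w i j = 0" using w by (auto simp: TT_def)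
  show "w \<in> Box n p N" unfolding Box_def Vec_def
  proof (intro CollectI allI conjI impI)
    fix i x assume "i \<in> {0..int N}" "x \<in> {..<n}"
    show "w i x \<in> {0..<int p}" using b by simp
  next
    fix i x assume "i \<in> {0..int N}" "x \<notin> {..<n}"
    thus "w i x = 0" using b by (simp add: not_less)
  next
    fix i assume "i \<notin> {0..int N}"
    hence "i < 0 \<or> i > int N" by auto
    thus "w i = (\<lambda>_. 0)" using z by auto
  qed
qed

lemma TT_mono: "k \<le> k' \<Longrightarrow> TT W k \<subseteq> TT W k'"
  unfolding TT_def by (auto intro: order.strict_trans2)

lemma LL_mono:
  assumes "invsp n p s W" "0 < s"
  shows "LL W k \<subseteq> LL W (k + nat s)"
proof
  fix v assume "v \<in> LL W k"
  then obtain w where w: "w \<in> TT W k" "v = w (int k)" by (auto simp: LL_def)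
  have "shiftf s w \<in> W" using assms(1) w(1) by (auto simp: invsp_def TT_def)
  moreover have "\<forall>i<0. \<forall>j. shiftf s w i j = 0" using w(1) assms(2) by (auto simp: TT_def shiftf_def)
  moreover have "\<forall>i > int (k + nat s). \<forall>j. shiftf s w i j = 0" using w(1) assms(2) by (auto simp: TT_def shiftf_def)
  ultimately have "shiftf s w \<in> TT W (k + nat s)" by (simp add: TT_def)
  moreover have "shiftf s w (int (k + nat s)) = v" using w(2) assms(2) by (simp add: shiftf_def)
  ultimately show "v \<in> LL W (k + nat s)" unfolding LL_def by (metis image_eqI)
qed

lemma mono_bounded_stable:
  fixes f :: "nat \<Rightarrow> nat"
  assumes "\<And>k. f k \<le> f (Suc k)" "\<And>k. f k \<le> B"
  shows "\<exists>K. \<forall>k\<ge>K. f k = f K"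
proof -
  have fin: "finite (range f)" using assms(2) by (meson finite_atMost finite_subset image_subsetI atMost_iff)
  define M where "M = Max (range f)"
  have "M \<in> range f" unfolding M_def using fin by (intro Max_in) auto
  then obtain K where K: "f K = M" by auto
  have mono: "\<And>a b. a \<le> b \<Longrightarrow> f a \<le> f b" using assms(1) by (rule lift_Suc_mono_le)
  have "\<forall>k\<ge>K. f k = f K"
  proof (intro allI impI)
    fix k assume "K \<le> k"
    hence "f K \<le> f k" by (rule mono)
    moreover have "f k \<le> M" unfolding M_def using fin by (intro Max_ge) auto
    ultimately show "f k = f K" using K by simp
  qed
  thus ?thesis by blast
qed

lemma stab_exists:
  assumes "invsp n p s W" "0 < s"
  shows "\<exists>N. stab s W N"
proof -
  define sn where "sn = nat s"
  define \<Phi> where "\<Phi> k = (\<Sum>r<sn. card (LL W (k + r)))" for k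
  have cm: "card (LL W k) \<le> card (LL W (k + sn))" for k
    using LL_mono[OF assms] LL_finite[OF assms(1)] unfolding sn_def by (intro card_mono) auto
  have step: "\<Phi> (Suc k) + card (LL W k) = \<Phi> k + card (LL W (k + sn))" for k
  proof -
    have "\<Phi> (Suc k) + card (LL W k) = (\<Sum>r<Suc sn. card (LL W (k + r)))"
      unfolding \<Phi>_def by (subst sum.lessThan_Suc_shift) simp
    also have "\<dots> = \<Phi> k + card (LL W (k + sn))" unfolding \<Phi>_def by simp
    finally show ?thesis .
  qed
  have inc: "\<Phi> k \<le> \<Phi> (Suc k)" for k using step[of k] cm[of k] by linarith
  have bd: "\<Phi> k \<le> sn * card (Vec n p)" for k
  proof -
    have "\<Phi> k \<le> (\<Sum>r<sn. card (Vec n p))" unfolding \<Phi>_def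
      using LL_Vec[OF assms(1)] Vec_finite by (intro sum_mono card_mono) auto
    thus ?thesis by simp
  qed
  obtain K where K: "\<forall>k\<ge>K. \<Phi> k = \<Phi> K" using mono_bounded_stable[of \<Phi>, OF inc bd] by blast
  have "stab s W (K + sn)"
    unfolding stab_def
  proof (intro conjI allI impI)
    fix i assume "K + sn \<le> i"
    define k where "k = i - sn"
    have ik: "i = k + sn" "K \<le> k" using \<open>K + sn \<le> i\<close> unfolding k_def by auto
    have "\<Phi> (Suc k) = \<Phi> k" using K ik(2) by (metis le_SucI)
    hence "card (LL W k) = card (LL W (k + sn))" using step[of k] by linarith
    hence "LL W k = LL W (k + sn)"
      using LL_mono[OF assms, of k] LL_finite[OF assms(1)] unfolding sn_def by (intro card_subset_eq) auto
    thus "LL W i \<subseteq> LL W (i - nat s)" using ik unfolding sn_def by simp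
  next
    show "nat s \<le> K + sn" unfolding sn_def by simp
  qed
  thus ?thesis by blast
qed

lemma shiftf_shiftf: "shiftf a (shiftf b w) = shiftf (a + b) w"
  by (simp add: shiftf_def algebra_simps)

lemma shiftf_0: "shiftf 0 w = w"
  by (simp add: shiftf_def)

lemma shift_mult_closed:
  assumes "invsp n p s W" "a \<in> W"
  shows "shiftf (s * int m) a \<in> W \<and> shiftf (- (s * int m)) a \<in> W"
proof (induction m)
  case 0
  then show ?case using assms(2) by (simp add: shiftf_0)
next
  case (Suc m)
  have "shiftf (s * int (Suc m)) a = shiftf s (shiftf (s * int m) a)"
    by (simp add: shiftf_shiftf algebra_simps)
  moreover have "shiftf (- (s * int (Suc m))) a = shiftf (-s) (shiftf (- (s * int m)) a)"
    by (simp add: shiftf_shiftf algebra_simps)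
  ultimately show ?case using Suc assms(1) by (simp add: invsp_def)
qed

lemma finite_int_bound: "finite (S :: int set) \<Longrightarrow> \<exists>B::nat. \<forall>i\<in>S. \<bar>i\<bar> \<le> int B"
proof (induction S rule: finite_induct)
  case empty
  then show ?case by simp
next
  case (insert x F)
  then obtain B where "\<forall>i\<in>F. \<bar>i\<bar> \<le> int B" by blast
  hence "\<forall>i\<in>insert x F. \<bar>i\<bar> \<le> int (max B (nat \<bar>x\<bar>))" by auto
  thus ?case by blast
qed

lemma W_sub:
  assumes p0: "0 < p" and s0: "0 < s" and i1: "invsp n p s W1" and i2: "invsp n p s W2"
    and st: "stab s W1 N" and eqT: "TT W1 N = TT W2 N"
  shows "W1 \<subseteq> W2"
proof -
  define sn where "sn = nat s"
  have ssn: "int sn = s" using s0 unfolding sn_def by simp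
  have snN: "sn \<le> N" using st unfolding stab_def sn_def by simp
  have snp: "0 < sn" using s0 unfolding sn_def by simp
  have W1B: "\<And>w i j. w \<in> W1 \<Longrightarrow> 0 \<le> w i j \<and> w i j < int p"
    using i1 unfolding invsp_def by (auto simp: Bset_iff subset_iff)
  have claim: "\<forall>w. w \<in> TT W1 i \<longrightarrow> w \<in> W2" for i
  proof (induction i rule: less_induct)
    case (less i)
    show ?case
    proof (intro allI impI)
      fix w assume w: "w \<in> TT W1 i"
      show "w \<in> W2"
      proof (cases "i \<le> N")
        case True
        hence "w \<in> TT W1 N" using w TT_mono by blast
        hence "w \<in> TT W2 N" using eqT by simp
        thus ?thesis by (simp add: TT_def)
      next
        case False
        hence iN: "N < i" by simp
        have "w (int i) \<in> LL W1 i" using w unfolding LL_def by blast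
        also have "\<dots> \<subseteq> LL W1 (i - sn)" using st iN unfolding stab_def sn_def by simp
        finally obtain v where v: "v \<in> TT W1 (i - sn)" "v (int (i - sn)) = w (int i)"
          unfolding LL_def by auto
        have isn: "int (i - sn) = int i - s" using snN iN ssn by simp
        have vW2: "v \<in> W2" using less.IH[of "i - sn"] v(1) snp iN snN by simp
        have vW1: "v \<in> W1" using v(1) by (simp add: TT_def)
        define sv where "sv = shiftf s v"
        have sv1: "sv \<in> W1" using i1 vW1 unfolding sv_def invsp_def by blast
        have sv2: "sv \<in> W2" using i2 vW2 unfolding sv_def invsp_def by blast
        have wW1: "w \<in> W1" using w by (simp add: TT_def)
        define u where "u = psub p w sv"
        have u1: "u \<in> W1" using i1 wW1 sv1 unfolding u_def invsp_def by blast
        have wz: "\<forall>i'<0. \<forall>j. w i' j = 0" "\<forall>i' > int i. \<forall>j. w i' j = 0" using w by (auto simp: TT_def)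
        have vz: "\<forall>i'<0. \<forall>j. v i' j = 0" "\<forall>i' > int (i - sn). \<forall>j. v i' j = 0" using v(1) by (auto simp: TT_def)
        have ueq: "u i' j = (w i' j - v (i' - s) j) mod int p" for i' j
          by (simp add: u_def psub_def sv_def shiftf_def)
        have "u \<in> TT W1 (i - 1)"
          unfolding TT_def
        proof (intro CollectI conjI allI impI)
          show "u \<in> W1" by (rule u1)
        next
          fix i' :: int and j assume i'0: "i' < 0"
          have a1: "w i' j = 0" using wz(1) i'0 by blast
          have "i' - s < 0" using i'0 s0 by linarith
          hence a2: "v (i' - s) j = 0" using vz(1) by blast
          show "u i' j = 0" using ueq[of i' j] a1 a2 by simp
        next
          fix i' :: int and j assume a: "int (i - 1) < i'"
          show "u i' j = 0"
          proof (cases "i' = int i")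
            case True
            have "i' - s = int (i - sn)" using isn True by simp
            hence "v (i' - s) j = w i' j" using v(2) True by simp
            thus ?thesis using ueq[of i' j] by simp
          next
            case False
            hence g: "i' > int i" using a iN by linarith
            hence a1: "w i' j = 0" using wz(2) by blast
            have "i' - s > int (i - sn)" using g isn by linarith
            hence a2: "v (i' - s) j = 0" using vz(2) by blast
            show ?thesis using ueq[of i' j] a1 a2 by simp
          qed
        qed
        hence u2: "u \<in> W2" using less.IH[of "i - 1"] iN by simp
        have "padd p u sv \<in> W2" using i2 u2 sv2 unfolding invsp_def by blast
        moreover have "padd p u sv = w"
        proof (intro ext)
          fix i' j
          have "padd p u sv i' j = (w i' j - sv i' j + sv i' j) mod int p"
            unfolding padd_def u_def psub_def by (simp add: mod_add_left_eq)
          also have "\<dots> = w i' j" using W1B[OF wW1] by simp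
          finally show "padd p u sv i' j = w i' j" .
        qed
        ultimately show ?thesis by simp
      qed
    qed
  qed
  show ?thesis
  proof
    fix w assume wW1: "w \<in> W1"
    have "finite {i. \<exists>j. w i j \<noteq> 0}" using i1 wW1 unfolding invsp_def by (auto simp: Bset_iff)
    then obtain B where B: "\<forall>i\<in>{i. \<exists>j. w i j \<noteq> 0}. \<bar>i\<bar> \<le> int B" using finite_int_bound by blast
    hence Bz: "\<And>i j. int B < \<bar>i\<bar> \<Longrightarrow> w i j = 0" by force
    define w' where "w' = shiftf (s * int B) w"
    have w'1: "w' \<in> W1" using shift_mult_closed[OF i1 wW1] unfolding w'_def by blast
    have sB: "s * int B \<ge> int B" using s0 by (simp add: mult_le_cancel_right1)
    have "w' \<in> TT W1 (nat (int B + s * int B))"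
      unfolding TT_def
    proof (intro CollectI conjI allI impI)
      show "w' \<in> W1" by (rule w'1)
    next
      fix i :: int and j assume "i < 0"
      hence "int B < \<bar>i - s * int B\<bar>" using sB by linarith
      thus "w' i j = 0" unfolding w'_def shiftf_def using Bz by simp
    next
      fix i :: int and j assume "int (nat (int B + s * int B)) < i"
      hence "int B < \<bar>i - s * int B\<bar>" using sB by linarith
      thus "w' i j = 0" unfolding w'_def shiftf_def using Bz by simp
    qed
    hence "w' \<in> W2" using claim by blast
    hence "shiftf (- (s * int B)) w' \<in> W2" using shift_mult_closed[OF i2] by blast
    moreover have "shiftf (- (s * int B)) w' = w" unfolding w'_def by (simp add: shiftf_shiftf shiftf_0)
    ultimately show "w \<in> W2" by simp
  qed
qed

lemma invsp_countable:
  assumes p0: "0 < p" and s0: "0 < s"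
  shows "countable {W. invsp n p s W}"
proof -
  define NN where "NN W = (SOME N. stab s W N)" for W
  have NN: "stab s W (NN W)" if "invsp n p s W" for W
    unfolding NN_def using stab_exists[OF that s0] by (rule someI_ex)
  define G where "G W = (NN W, TT W (NN W))" for W
  have inj: "inj_on G {W. invsp n p s W}"
  proof (rule inj_onI)
    fix W1 W2 assume a: "W1 \<in> {W. invsp n p s W}" "W2 \<in> {W. invsp n p s W}" "G W1 = G W2"
    have i1: "invsp n p s W1" and i2: "invsp n p s W2" using a(1,2) by auto
    have e12: "NN W1 = NN W2 \<and> TT W1 (NN W1) = TT W2 (NN W2)" using a(3) unfolding G_def by (rule Pair_inject) blast
    have e1: "NN W1 = NN W2" and e2: "TT W1 (NN W1) = TT W2 (NN W2)" using e12 by blast+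
    have e3: "TT W1 (NN W1) = TT W2 (NN W1)" using e1 e2 by metis
    have e4: "TT W2 (NN W2) = TT W1 (NN W2)" using e1 e2 by metis
    have "W1 \<subseteq> W2" by (rule W_sub[OF p0 s0 i1 i2 NN[OF i1] e3])
    moreover have "W2 \<subseteq> W1" by (rule W_sub[OF p0 s0 i2 i1 NN[OF i2] e4])
    ultimately show "W1 = W2" by simp
  qed
  have sub: "G ` {W. invsp n p s W} \<subseteq> Sigma UNIV (\<lambda>N. Pow (Box n p N))"
  proof
    fix x assume "x \<in> G ` {W. invsp n p s W}"
    then obtain W where "invsp n p s W" "x = G W" by blast
    thus "x \<in> Sigma UNIV (\<lambda>N. Pow (Box n p N))" unfolding G_def using TT_Box by simp
  qed
  have "countable (Sigma (UNIV :: nat set) (\<lambda>N. Pow (Box n p N)))"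
    by (intro countable_SIGMA countableI_type countable_finite) (simp add: Box_finite)
  hence "countable (G ` {W. invsp n p s W})" using sub by (rule countable_subset[rotated])
  thus ?thesis using inj by (rule countable_image_inj_on)
qed

definition Wof :: "((int \<Rightarrow> nat \<Rightarrow> int) \<times> int) set \<Rightarrow> (int \<Rightarrow> nat \<Rightarrow> int) set" where
  "Wof V = {w. (w, 0) \<in> V}"

lemma Wof_invsp:
  assumes p0: "0 < p" and V: "V \<in> SubL n p" and fs: "(f, s) \<in> V"
  shows "invsp n p s (Wof V)"
proof -
  have sg: "subgroup V (Lgrp n p)" using V by (simp add: SubL_def)
  have mc: "\<And>x y. x \<in> V \<Longrightarrow> y \<in> V \<Longrightarrow> x \<otimes>\<^bsub>Lgrp n p\<^esub> y \<in> V" using subgroup.m_closed[OF sg] by blast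
  have ic: "\<And>x. x \<in> V \<Longrightarrow> inv\<^bsub>Lgrp n p\<^esub> x \<in> V" using subgroup.m_inv_closed[OF sg] by blast
  have Vc: "\<And>x. x \<in> V \<Longrightarrow> x \<in> Lcarrier n p" using SubL_sub[OF V] by blast
  have fc: "(f, s) \<in> Lcarrier n p" using Vc fs by blast
  have sub: "Wof V \<subseteq> Bset n p" unfolding Wof_def Bset_def using Vc by blast
  have add: "padd p a b \<in> Wof V \<and> psub p a b \<in> Wof V" if a: "a \<in> Wof V" "b \<in> Wof V" for a b
  proof
    have "(a, 0) \<otimes>\<^bsub>Lgrp n p\<^esub> (b, 0) \<in> V" using a mc by (simp add: Wof_def)
    moreover have "(a, 0) \<otimes>\<^bsub>Lgrp n p\<^esub> (b, 0) = (padd p a b, 0)" by (simp add: Lmult padd_def)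
    ultimately show "padd p a b \<in> Wof V" by (simp add: Wof_def)
  next
    have bc: "(b, 0) \<in> Lcarrier n p" using a Vc by (simp add: Wof_def)
    have "(a, 0) \<otimes>\<^bsub>Lgrp n p\<^esub> inv\<^bsub>Lgrp n p\<^esub> (b, 0) \<in> V" using a mc ic by (simp add: Wof_def)
    moreover have "(a, 0) \<otimes>\<^bsub>Lgrp n p\<^esub> inv\<^bsub>Lgrp n p\<^esub> (b, 0) = (psub p a b, 0)"
      by (simp add: Linv[OF p0 bc] Lmult psub_def mod_add_right_eq fun_eq_iff)
    ultimately show "psub p a b \<in> Wof V" by (simp add: Wof_def)
  qed
  have sh: "shiftf s a \<in> Wof V \<and> shiftf (-s) a \<in> Wof V" if a: "a \<in> Wof V" for a
  proof
    have ac: "(a, 0) \<in> Lcarrier n p" using a Vc by (simp add: Wof_def)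
    hence ab: "\<And>i j. 0 \<le> a i j \<and> a i j < int p" by (simp add: Lcarrier_iff)
    have "(f, s) \<otimes>\<^bsub>Lgrp n p\<^esub> (a, 0) \<otimes>\<^bsub>Lgrp n p\<^esub> inv\<^bsub>Lgrp n p\<^esub> (f, s) \<in> V"
      using a mc ic fs by (simp add: Wof_def)
    moreover have "(f, s) \<otimes>\<^bsub>Lgrp n p\<^esub> (a, 0) \<otimes>\<^bsub>Lgrp n p\<^esub> inv\<^bsub>Lgrp n p\<^esub> (f, s) = (shiftf s a, 0)"
    proof -
      have "\<And>i j. ((f i j + a (i - s) j) mod int p + - f i j mod int p) mod int p = a (i - s) j"
      proof -
        fix i j
        have "((f i j + a (i - s) j) mod int p + - f i j mod int p) mod int p = (f i j + a (i - s) j + - f i j) mod int p"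
          by (simp add: mod_add_eq)
        also have "\<dots> = a (i - s) j" using ab[of "i - s" j] by simp
        finally show "((f i j + a (i - s) j) mod int p + - f i j mod int p) mod int p = a (i - s) j" .
      qed
      thus ?thesis by (simp add: Linv[OF p0 fc] Lmult shiftf_def fun_eq_iff)
    qed
    ultimately show "shiftf s a \<in> Wof V" by (simp add: Wof_def)
  next
    have ac: "(a, 0) \<in> Lcarrier n p" using a Vc by (simp add: Wof_def)
    hence ab: "\<And>i j. 0 \<le> a i j \<and> a i j < int p" by (simp add: Lcarrier_iff)
    have "inv\<^bsub>Lgrp n p\<^esub> (f, s) \<otimes>\<^bsub>Lgrp n p\<^esub> (a, 0) \<otimes>\<^bsub>Lgrp n p\<^esub> (f, s) \<in> V"
      using a mc ic fs by (simp add: Wof_def)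
    moreover have "inv\<^bsub>Lgrp n p\<^esub> (f, s) \<otimes>\<^bsub>Lgrp n p\<^esub> (a, 0) \<otimes>\<^bsub>Lgrp n p\<^esub> (f, s) = (shiftf (-s) a, 0)"
    proof -
      have "\<And>i j. ((- f (i + s) j mod int p + a (i + s) j) mod int p + f (i + s) j) mod int p = a (i + s) j"
      proof -
        fix i j
        have "((- f (i + s) j mod int p + a (i + s) j) mod int p + f (i + s) j) mod int p
            = (- f (i + s) j + a (i + s) j + f (i + s) j) mod int p"
          by (simp add: mod_add_eq mod_add_left_eq)
        also have "\<dots> = a (i + s) j" using ab[of "i + s" j] by simp
        finally show "((- f (i + s) j mod int p + a (i + s) j) mod int p + f (i + s) j) mod int p = a (i + s) j" .
      qed
      thus ?thesis by (simp add: Linv[OF p0 fc] Lmult shiftf_def fun_eq_iff)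
    qed
    ultimately show "shiftf (-s) a \<in> Wof V" by (simp add: Wof_def)
  qed
  show ?thesis unfolding invsp_def using sub add sh by blast
qed

lemma fiber_sub:
  assumes p0: "0 < p" and V1: "V1 \<in> pi1_fiber n p s" and V2: "V2 \<in> SubL n p"
    and W: "Wof V1 \<subseteq> Wof V2" and f1: "(f, s) \<in> V1" and f2: "(f, s) \<in> V2"
  shows "V1 \<subseteq> V2"
proof -
  interpret G: group "Lgrp n p" by (rule Lgroup[OF p0])
  have V1S: "V1 \<in> SubL n p" using V1 by (simp add: pi1_fiber_def)
  have sg1: "subgroup V1 (Lgrp n p)" and sg2: "subgroup V2 (Lgrp n p)" using V1S V2 by (auto simp: SubL_def)
  have fc: "(f, s) \<in> carrier (Lgrp n p)" using f1 SubL_sub[OF V1S] by (auto simp: Lcarr)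
  have claim: "\<forall>h. (h, s * m) \<in> V1 \<longrightarrow> (h, s * m) \<in> V2" for m
  proof (induction m rule: int_induct[where k = 0])
    case base
    then show ?case using W by (auto simp: Wof_def)
  next
    case (step1 i)
    show ?case
    proof (intro allI impI)
      fix h assume h: "(h, s * (i + 1)) \<in> V1"
      define x where "x = (h, s * (i + 1)) \<otimes>\<^bsub>Lgrp n p\<^esub> inv\<^bsub>Lgrp n p\<^esub> (f, s)"
      have hc: "(h, s * (i + 1)) \<in> carrier (Lgrp n p)" using h SubL_sub[OF V1S] by (auto simp: Lcarr)
      have x1: "x \<in> V1" unfolding x_def using h f1 subgroup.m_closed[OF sg1] subgroup.m_inv_closed[OF sg1] by blast
      have "snd x = s * i" unfolding x_def using fc p0 by (simp add: snd_mult snd_inv Lcarr algebra_simps)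
      hence "x = (fst x, s * i)" by (metis prod.collapse)
      hence "x \<in> V2" using step1.IH x1 by metis
      hence "x \<otimes>\<^bsub>Lgrp n p\<^esub> (f, s) \<in> V2" using f2 subgroup.m_closed[OF sg2] by blast
      moreover have "x \<otimes>\<^bsub>Lgrp n p\<^esub> (f, s) = (h, s * (i + 1))"
        unfolding x_def using hc fc by (simp add: G.m_assoc)
      ultimately show "(h, s * (i + 1)) \<in> V2" by simp
    qed
  next
    case (step2 i)
    show ?case
    proof (intro allI impI)
      fix h assume h: "(h, s * (i - 1)) \<in> V1"
      define x where "x = (h, s * (i - 1)) \<otimes>\<^bsub>Lgrp n p\<^esub> (f, s)"
      have hc: "(h, s * (i - 1)) \<in> carrier (Lgrp n p)" using h SubL_sub[OF V1S] by (auto simp: Lcarr)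
      have x1: "x \<in> V1" unfolding x_def using h f1 subgroup.m_closed[OF sg1] by blast
      have "snd x = s * i" unfolding x_def by (simp add: snd_mult algebra_simps)
      hence "x = (fst x, s * i)" by (metis prod.collapse)
      hence "x \<in> V2" using step2.IH x1 by metis
      hence "x \<otimes>\<^bsub>Lgrp n p\<^esub> inv\<^bsub>Lgrp n p\<^esub> (f, s) \<in> V2"
        using f2 subgroup.m_closed[OF sg2] subgroup.m_inv_closed[OF sg2] by blast
      moreover have "x \<otimes>\<^bsub>Lgrp n p\<^esub> inv\<^bsub>Lgrp n p\<^esub> (f, s) = (h, s * (i - 1))"
        unfolding x_def using hc fc by (simp add: G.m_assoc)
      ultimately show "(h, s * (i - 1)) \<in> V2" by simp
    qed
  qed
  show ?thesis
  proof
    fix x assume x: "x \<in> V1"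
    obtain h k where xe: "x = (h, k)" by (cases x)
    have "k \<in> snd ` V1" using x xe by force
    then obtain m where "k = s * m" using V1 by (auto simp: pi1_fiber_def)
    thus "x \<in> V2" using claim x xe by blast
  qed
qed

lemma fiber_countable: "0 < p \<Longrightarrow> 0 < s \<Longrightarrow> countable (pi1_fiber n p s)"
proof -
  assume p0: "0 < p" and s0: "0 < s"
  let ?F = "pi1_fiber n p s"
  define fo where "fo V = (SOME f. (f, s) \<in> V)" for V :: "((int \<Rightarrow> nat \<Rightarrow> int) \<times> int) set"
  have fo: "(fo V, s) \<in> V" if "V \<in> ?F" for V
  proof -
    have "s \<in> snd ` V" using that by (auto simp: pi1_fiber_def image_iff intro: exI[of _ 1])
    then obtain f where "(f, s) \<in> V" by force
    thus ?thesis unfolding fo_def by (rule someI[where P="\<lambda>f. (f, s) \<in> V"])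
  qed
  define M where "M V = (Wof V, fo V)" for V
  have inj: "inj_on M ?F"
  proof (rule inj_onI)
    fix V1 V2 assume a: "V1 \<in> ?F" "V2 \<in> ?F" "M V1 = M V2"
    have e: "Wof V1 = Wof V2" "fo V1 = fo V2" using a(3) unfolding M_def by (simp_all only: prod.inject)
    have S: "V1 \<in> SubL n p" "V2 \<in> SubL n p" using a(1,2) by (auto simp: pi1_fiber_def)
    have "V1 \<subseteq> V2" using fiber_sub[OF p0 a(1) S(2), of "fo V1"] e fo[OF a(1)] fo[OF a(2)] by simp
    moreover have "V2 \<subseteq> V1" using fiber_sub[OF p0 a(2) S(1), of "fo V1"] e fo[OF a(1)] fo[OF a(2)] by simp
    ultimately show "V1 = V2" by simp
  qed
  have sub: "M ` ?F \<subseteq> {W. invsp n p s W} \<times> (fst ` Lcarrier n p)"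
  proof
    fix y assume "y \<in> M ` ?F"
    then obtain V where V: "V \<in> ?F" "y = M V" by blast
    have S: "V \<in> SubL n p" using V(1) by (auto simp: pi1_fiber_def)
    have "invsp n p s (Wof V)" using Wof_invsp[OF p0 S fo[OF V(1)]] .
    moreover have "(fo V, s) \<in> Lcarrier n p" using fo[OF V(1)] SubL_sub[OF S] by blast
    hence "fo V \<in> fst ` Lcarrier n p" by force
    ultimately show "y \<in> {W. invsp n p s W} \<times> (fst ` Lcarrier n p)" using V(2) by (simp add: M_def)
  qed
  have "countable ({W. invsp n p s W} \<times> (fst ` Lcarrier n p))"
    using invsp_countable[OF p0 s0] Lcarrier_countable by (intro countable_SIGMA countable_image) auto
  hence "countable (M ` ?F)" using sub by (rule countable_subset[rotated])
  thus ?thesis using inj by (rule countable_image_inj_on)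
qed
lemma fiber_SubL: "pi1_fiber n p s \<subseteq> SubL n p"
  by (auto simp: pi1_fiber_def)

lemma one_carr: "0 < p \<Longrightarrow> \<one>\<^bsub>Lgrp n p\<^esub> \<in> Lcarrier n p"
  by (simp add: Lone Lcarrier_iff)

lemma H_in_class: "0 < p \<Longrightarrow> H \<in> SubL n p \<Longrightarrow> H \<in> conj_class n p H"
  unfolding conj_class_def using conjL_one[of p H n] one_carr[of p n] SubL_sub[of H n p]
  by (auto simp: image_iff)

lemma part1:
  assumes p0: "0 < p" and cF: "countable (pi1_fiber n p s)" and bp: "borel_prob_Sub n p \<mu>"
    and ci: "conj_invariant n p \<mu>" and ce: "conj_ergodic n p \<mu>"
    and m1: "emeasure \<mu> (pi1_fiber n p s) = 1"
  shows "\<exists>H \<in> pi1_fiber n p s. finite (conj_class n p H) \<and> conj_class n p H \<in> sets \<mu>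
     \<and> emeasure \<mu> (conj_class n p H) = 1 \<and> (\<forall>V \<in> conj_class n p H. emeasure \<mu> {V} = emeasure \<mu> {H})"
proof -
  interpret prob_space \<mu> using bp by (simp add: borel_prob_Sub_def)
  have sp: "space \<mu> = SubL n p" using space_mu[OF bp] .
  let ?F = "pi1_fiber n p s"
  have sing: "\<And>V. V \<in> SubL n p \<Longrightarrow> {V} \<in> sets \<mu>" using singleton_sets[OF bp _ p0] by blast
  obtain H where H: "H \<in> ?F" "emeasure \<mu> {H} \<noteq> 0"
  proof (rule ccontr)
    assume "\<not> thesis"
    with that have z: "\<And>H. H \<in> ?F \<Longrightarrow> emeasure \<mu> {H} = 0" by blast
    have "emeasure \<mu> ?F = (\<integral>\<^sup>+x. emeasure \<mu> {x} \<partial>count_space ?F)"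
      using sing fiber_SubL[of n p s] cF by (intro emeasure_countable_singleton) blast+
    also have "\<dots> = (\<integral>\<^sup>+x. 0 \<partial>count_space ?F)"
      using z by (intro nn_integral_cong) auto
    finally show False using m1 by simp
  qed
  have HS: "H \<in> SubL n p" using H fiber_SubL by blast
  let ?C = "conj_class n p H"
  have CS: "?C \<subseteq> SubL n p" using class_SubL[OF p0 HS] .
  have eq: "\<forall>V \<in> ?C. emeasure \<mu> {V} = emeasure \<mu> {H}"
  proof
    fix V assume "V \<in> ?C"
    then obtain g where g: "g \<in> Lcarrier n p" "V = conjL n p g H" by (auto simp: conj_class_def)
    have VS: "V \<in> SubL n p" using CS \<open>V \<in> ?C\<close> by blast
    have pre: "conjL n p g -` {V} \<inter> space \<mu> = {H}"
      using g HS conjL_inj[OF p0 SubL_sub SubL_sub g(1)] by (auto simp: sp)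
    have "emeasure \<mu> (conjL n p g -` {V} \<inter> space \<mu>) = emeasure \<mu> {V}"
      using ci g(1) sing[OF VS] by (auto simp: conj_invariant_def)
    thus "emeasure \<mu> {V} = emeasure \<mu> {H}" using pre by simp
  qed
  define c where "c = measure \<mu> {H}"
  have cpos: "c > 0" using H(2) by (simp add: c_def emeasure_eq_measure zero_less_measure_iff)
  have ceq: "\<And>V. V \<in> ?C \<Longrightarrow> measure \<mu> {V} = c"
    using eq by (simp add: c_def measure_def)
  have fin: "finite ?C"
  proof (rule ccontr)
    assume inf: "infinite ?C"
    define N where "N = nat \<lceil>2 / c\<rceil>"
    obtain D where D: "finite D" "card D = N" "D \<subseteq> ?C" using infinite_arbitrarily_large[OF inf] by blast
    have "measure \<mu> D = (\<Sum>x\<in>D. measure \<mu> {x})"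
      using D CS sing by (intro finite_measure_eq_sum_singleton) auto
    also have "\<dots> = (\<Sum>x\<in>D. c)" using D(3) ceq by (intro sum.cong) auto
    also have "\<dots> = real N * c" using D(2) by simp
    finally have "real N * c \<le> 1" using prob_le_1[of D] by simp
    moreover have "real N \<ge> 2 / c" unfolding N_def by (rule real_nat_ceiling_ge)
    hence "real N * c \<ge> 2 / c * c" using cpos by (intro mult_right_mono) auto
    hence "real N * c \<ge> 2" using cpos by simp
    ultimately show False by simp
  qed
  have cC: "countable ?C" using fin by (rule countable_finite)
  have Csets: "?C \<in> sets \<mu>" using sing CS by (intro sets.countable[OF _ cC]) blast
  have Cinv: "\<forall>g \<in> Lcarrier n p. (conjL n p g -` ?C) \<inter> space \<mu> = ?C"
    unfolding sp using class_invariant[OF p0 HS] by blast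
  have "emeasure \<mu> ?C = 0 \<or> emeasure \<mu> ?C = 1" using ce Csets Cinv unfolding conj_ergodic_def by blast
  moreover have "emeasure \<mu> {H} \<le> emeasure \<mu> ?C"
    using H_in_class[OF p0 HS] Csets by (intro emeasure_mono) auto
  ultimately have "emeasure \<mu> ?C = 1" using H(2) by auto
  thus ?thesis using H(1) fin Csets eq by blast
qed


lemma meas_formula:
  assumes ps: "prob_space \<nu>" and fin: "finite C" and Cs: "C \<in> sets \<nu>" and C1: "emeasure \<nu> C = 1"
    and sing: "\<forall>x\<in>C. {x} \<in> sets \<nu>" and eq: "\<forall>V\<in>C. \<forall>W\<in>C. emeasure \<nu> {V} = emeasure \<nu> {W}"
    and A: "A \<in> sets \<nu>"
  shows "measure \<nu> A = card (A \<inter> C) / card C"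
proof -
  interpret prob_space \<nu> by (rule ps)
  have "C \<noteq> {}" using C1 by auto
  then obtain x0 where x0: "x0 \<in> C" by blast
  define c where "c = measure \<nu> {x0}"
  have ceq: "\<And>x. x \<in> C \<Longrightarrow> measure \<nu> {x} = c"
    using eq x0 unfolding c_def measure_def by metis
  have sumc: "\<And>B. B \<subseteq> C \<Longrightarrow> measure \<nu> B = card B * c"
  proof -
    fix B assume B: "B \<subseteq> C"
    hence fB: "finite B" using fin finite_subset by blast
    have "measure \<nu> B = (\<Sum>x\<in>B. measure \<nu> {x})"
      using fB B sing by (intro finite_measure_eq_sum_singleton) auto
    also have "\<dots> = (\<Sum>x\<in>B. c)" using B ceq by (intro sum.cong) auto
    finally show "measure \<nu> B = card B * c" by simp
  qed
  have "measure \<nu> C = 1" using C1 by (simp add: emeasure_eq_measure)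
  hence cC: "card C * c = 1" using sumc[of C] by simp
  have cardpos: "card C > 0" using fin \<open>C \<noteq> {}\<close> by (simp add: card_gt_0_iff)
  have cval: "c = 1 / card C" using cC cardpos by (simp add: field_simps)
  have AC: "A \<inter> C \<in> sets \<nu>" "A - C \<in> sets \<nu>" using A Cs by auto
  have "measure \<nu> A = measure \<nu> ((A \<inter> C) \<union> (A - C))" by (metis Int_Diff_Un)
  also have "\<dots> = measure \<nu> (A \<inter> C) + measure \<nu> (A - C)"
    using AC by (intro finite_measure_Union) auto
  also have "measure \<nu> (A - C) = 0"
  proof -
    have "A - C \<subseteq> space \<nu> - C" using sets.sets_into_space[OF A] by auto
    hence "measure \<nu> (A - C) \<le> measure \<nu> (space \<nu> - C)"
      using Cs by (intro finite_measure_mono) auto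
    also have "\<dots> = 0" using prob_compl[OF Cs] \<open>measure \<nu> C = 1\<close> by simp
    finally show ?thesis by (simp add: antisym)
  qed
  finally show ?thesis using sumc[of "A \<inter> C"] cval by simp
qed

lemma measure_determined:
  assumes p0: "0 < p" and bp1: "borel_prob_Sub n p \<nu>1" and bp2: "borel_prob_Sub n p \<nu>2"
    and fin: "finite C" and CS: "C \<subseteq> SubL n p"
    and C1: "C \<in> sets \<nu>1" "emeasure \<nu>1 C = 1" "\<forall>V\<in>C. \<forall>W\<in>C. emeasure \<nu>1 {V} = emeasure \<nu>1 {W}"
    and C2: "C \<in> sets \<nu>2" "emeasure \<nu>2 C = 1" "\<forall>V\<in>C. \<forall>W\<in>C. emeasure \<nu>2 {V} = emeasure \<nu>2 {W}"
  shows "\<nu>1 = \<nu>2"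
proof (rule measure_eqI)
  show se: "sets \<nu>1 = sets \<nu>2" using bp1 bp2 by (simp add: borel_prob_Sub_def)
  fix A assume A: "A \<in> sets \<nu>1"
  have ps: "prob_space \<nu>1" "prob_space \<nu>2" using bp1 bp2 by (auto simp: borel_prob_Sub_def)
  have s1: "\<forall>x\<in>C. {x} \<in> sets \<nu>1" using singleton_sets[OF bp1 _ p0] CS by blast
  have s2: "\<forall>x\<in>C. {x} \<in> sets \<nu>2" using singleton_sets[OF bp2 _ p0] CS by blast
  have "measure \<nu>1 A = measure \<nu>2 A"
    using meas_formula[OF ps(1) fin C1(1,2) s1 C1(3) A] meas_formula[OF ps(2) fin C2(1,2) s2 C2(3)] A se
    by simp
  thus "emeasure \<nu>1 A = emeasure \<nu>2 A"
    using finite_measure.emeasure_eq_measure[OF prob_space.axioms(1)[OF ps(1)]] finite_measure.emeasure_eq_measure[OF prob_space.axioms(1)[OF ps(2)]] by metis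
qed

theorem lemma3p1:
  fixes p n :: nat and s :: int and \<mu> :: "((int \<Rightarrow> nat \<Rightarrow> int) \<times> int) set measure"
  assumes "prime p" and "1 \<le> n" and "0 < s"
    and "borel_prob_Sub n p \<mu>" and "conj_invariant n p \<mu>" and "conj_ergodic n p \<mu>"
    and "emeasure \<mu> (pi1_fiber n p s) = 1"
  shows "(\<exists>H \<in> SubL n p. finite (conj_class n p H) \<and> conj_class n p H \<in> sets \<mu>
              \<and> emeasure \<mu> (conj_class n p H) = 1)
       \<and> countable {\<nu>. borel_prob_Sub n p \<nu> \<and> conj_invariant n p \<nu> \<and> conj_ergodic n p \<nu>
              \<and> (\<exists>t::int. 1 \<le> t \<and> emeasure \<nu> (pi1_fiber n p t) = 1)}"
proof
  have p0: "0 < p" using assms(1) prime_gt_0_nat by blast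
  show "\<exists>H \<in> SubL n p. finite (conj_class n p H) \<and> conj_class n p H \<in> sets \<mu>
              \<and> emeasure \<mu> (conj_class n p H) = 1"
  proof -
    obtain H where H: "H \<in> pi1_fiber n p s" "finite (conj_class n p H)" "conj_class n p H \<in> sets \<mu>"
      "emeasure \<mu> (conj_class n p H) = 1"
      using part1[OF p0 fiber_countable[OF p0 assms(3)] assms(4-7)] by blast
    have "H \<in> SubL n p" using H(1) fiber_SubL by blast
    thus ?thesis using H(2-4) by blast
  qed
  let ?S = "{\<nu>. borel_prob_Sub n p \<nu> \<and> conj_invariant n p \<nu> \<and> conj_ergodic n p \<nu>
              \<and> (\<exists>t::int. 1 \<le> t \<and> emeasure \<nu> (pi1_fiber n p t) = 1)}"
  define Q where "Q = (\<lambda>\<nu> C. finite C \<and> C \<in> sets \<nu> \<and> emeasure \<nu> C = 1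
      \<and> (\<exists>t::int. 1 \<le> t \<and> C \<subseteq> pi1_fiber n p t) \<and> (\<forall>V\<in>C. \<forall>W\<in>C. emeasure \<nu> {V} = emeasure \<nu> {W}))"
  have exQ: "\<exists>C. Q \<nu> C" if "\<nu> \<in> ?S" for \<nu>
  proof -
    from that obtain t where t: "1 \<le> t" "emeasure \<nu> (pi1_fiber n p t) = 1" by blast
    from that have b: "borel_prob_Sub n p \<nu>" "conj_invariant n p \<nu>" "conj_ergodic n p \<nu>" by auto
    have ct: "countable (pi1_fiber n p t)" using t(1) by (intro fiber_countable[OF p0]) simp
    obtain H where H: "H \<in> pi1_fiber n p t" "finite (conj_class n p H)" "conj_class n p H \<in> sets \<nu>"
      "emeasure \<nu> (conj_class n p H) = 1" "\<forall>V \<in> conj_class n p H. emeasure \<nu> {V} = emeasure \<nu> {H}"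
      using part1[OF p0 ct b t(2)] by blast
    have sub: "conj_class n p H \<subseteq> pi1_fiber n p t"
      using conjL_fiber[OF p0 H(1)] by (auto simp: conj_class_def)
    have eqs: "\<forall>V\<in>conj_class n p H. \<forall>W\<in>conj_class n p H. emeasure \<nu> {V} = emeasure \<nu> {W}"
      using H(5) by simp
    have "Q \<nu> (conj_class n p H)" unfolding Q_def using H(2-4) t(1) sub eqs by blast
    thus ?thesis by blast
  qed
  define \<Phi> where "\<Phi> = (\<lambda>\<nu>. SOME C. Q \<nu> C)"
  have PhiQ: "Q \<nu> (\<Phi> \<nu>)" if "\<nu> \<in> ?S" for \<nu>
    unfolding \<Phi>_def using exQ[OF that] by (rule someI_ex)
  let ?U = "\<Union>t\<in>{t::int. 1 \<le> t}. pi1_fiber n p t"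
  have cU: "countable ?U"
    using fiber_countable[OF p0] by (intro countable_UN[OF countableI_type]) simp
  have "\<Phi> ` ?S \<subseteq> {C. finite C \<and> C \<subseteq> ?U}"
  proof
    fix C assume "C \<in> \<Phi> ` ?S"
    then obtain \<nu> where "\<nu> \<in> ?S" "C = \<Phi> \<nu>" by blast
    hence "Q \<nu> C" using PhiQ by blast
    then obtain t where "finite C" "1 \<le> t" "C \<subseteq> pi1_fiber n p t" unfolding Q_def by blast
    thus "C \<in> {C. finite C \<and> C \<subseteq> ?U}" by blast
  qed
  hence "countable (\<Phi> ` ?S)" using countable_Collect_finite_subset[OF cU] countable_subset by blast
  moreover have "inj_on \<Phi> ?S"
  proof (rule inj_onI)
    fix \<nu>1 \<nu>2 assume a: "\<nu>1 \<in> ?S" "\<nu>2 \<in> ?S" "\<Phi> \<nu>1 = \<Phi> \<nu>2"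
    have q1: "Q \<nu>1 (\<Phi> \<nu>1)" using PhiQ[OF a(1)] .
    have q2: "Q \<nu>2 (\<Phi> \<nu>1)" using PhiQ[OF a(2)] a(3) by simp
    obtain t where "\<Phi> \<nu>1 \<subseteq> pi1_fiber n p t" using q1 unfolding Q_def by blast
    hence CS: "\<Phi> \<nu>1 \<subseteq> SubL n p" using fiber_SubL by blast
    have b1: "borel_prob_Sub n p \<nu>1" and b2: "borel_prob_Sub n p \<nu>2" using a(1,2) by auto
    from q1 have x1: "finite (\<Phi> \<nu>1)" "\<Phi> \<nu>1 \<in> sets \<nu>1" "emeasure \<nu>1 (\<Phi> \<nu>1) = 1"
       "\<forall>V\<in>\<Phi> \<nu>1. \<forall>W\<in>\<Phi> \<nu>1. emeasure \<nu>1 {V} = emeasure \<nu>1 {W}" unfolding Q_def by blast+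
    from q2 have x2: "\<Phi> \<nu>1 \<in> sets \<nu>2" "emeasure \<nu>2 (\<Phi> \<nu>1) = 1"
       "\<forall>V\<in>\<Phi> \<nu>1. \<forall>W\<in>\<Phi> \<nu>1. emeasure \<nu>2 {V} = emeasure \<nu>2 {W}" unfolding Q_def by blast+
    show "\<nu>1 = \<nu>2" by (rule measure_determined[OF p0 b1 b2 x1(1) CS x1(2-4) x2])
  qed
  ultimately show "countable ?S" using countable_image_inj_on by blast
qed

end
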